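(* Let $\mathbb{F}$ be a finite field, $n\ge2$, and let $S$ be an isolated subsemigroup of $M(n,\mathbb{F})$. Suppose one of the following holds: (1) $S$ contains the zero matrix; (2) $S$ contains two idempotents $e(V_1,V_2)$ and $e(V'_1,V'_2)$ of rank $n-1$ with $V_2\subseteq V'_1$; (3) $S$ contains an idempotent of rank at most $n-2$. Then $I_{n-1}\subseteq S$.
   Context: $M(n,\mathbb{F})$ is the semigroup of $n\times n$ matrices over $\mathbb{F}$, identified with linear operators on $\mathbb{F}^n$. For a direct sum decomposition $\mathbb{F}^n=V_1\oplus V_2$, $e(V_1,V_2)$ denotes the idempotent projection onto $V_1$ along $V_2$ (every idempotent of $M(n,\mathbb{F})$ is of this form). $I_{n-1}$ is the set of all matrices of rank at most $n-1$. A subsemigroup $T$ of a semigroup $S$ is isolated if for all $x\in S$ and positive integers $m$, $x^m\in T$ implies $x\in T$. *)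

theory Defs
  imports "HOL-Analysis.Analysis"
begin

text \<open>Matrix power w.r.t. matrix multiplication (the type-class power on vec is componentwise).\<close>
primrec matpow :: "'a::semiring_1^'n^'n \<Rightarrow> nat \<Rightarrow> 'a^'n^'n" where
  "matpow A 0 = mat 1"
| "matpow A (Suc k) = A ** matpow A k"

definition mat_subsemigroup :: "('a::semiring_1^'n^'n) set \<Rightarrow> bool" where
  "mat_subsemigroup S \<longleftrightarrow> S \<noteq> {} \<and> (\<forall>A\<in>S. \<forall>B\<in>S. A ** B \<in> S)"

definition mat_isolated :: "('a::semiring_1^'n^'n) set \<Rightarrow> bool" where
  "mat_isolated S \<longleftrightarrow> (\<forall>x m. 0 < m \<longrightarrow> matpow x m \<in> S \<longrightarrow> x \<in> S)"

end

theory Submission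
  imports Defs
begin


lemma lin_vm: "Vector_Spaces.linear (*s) (*s) (\<lambda>y. y v* (A::'a::field^'n^'m))"
proof -
  have "(\<lambda>y. y v* A) = (*v) (transpose A)" by (simp add: fun_eq_iff)
  then show ?thesis using matrix_vector_mul_linear_gen[of "transpose A"] by simp
qed

lemma vm_row_sum: "y v* (A::'a::field^'n^'m) = (\<Sum>i\<in>UNIV. y$i *s row i A)"
  by (simp add: vec_eq_iff vector_matrix_mult_def row_def sum_component mult.commute)

lemma row_axis: "row i (A::'a::field^'n^'m) = axis i 1 v* A"
proof -
  have "\<And>j. (\<Sum>k\<in>UNIV. (if k = i then 1 else 0) * A $ k $ j) = A$i$j"
    by (simp add: if_distrib[of "\<lambda>c. c * _"] cong: if_cong)
  then show ?thesis by (simp add: vec_eq_iff vector_matrix_mult_def axis_def row_def)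
qed

lemma rank_lrange: "rank (A::'a::field^'n^'m) = vec.dim (range (\<lambda>y. y v* A))"
proof -
  have 1: "rows A \<subseteq> range (\<lambda>y. y v* A)"
    using row_axis by (auto simp: rows_def)
  have 2: "range (\<lambda>y. y v* A) \<subseteq> vec.span (rows A)"
  proof
    fix z assume "z \<in> range (\<lambda>y. y v* A)"
    then obtain y where z: "z = y v* A" by blast
    show "z \<in> vec.span (rows A)" unfolding z vm_row_sum
      by (intro vec.span_sum vec.span_scale vec.span_base) (auto simp: rows_def)
  qed
  have "vec.span (rows A) = vec.span (range (\<lambda>y. y v* A))"
    using vec.span_mono[OF 1] vec.span_mono[OF 2] vec.span_span by blast
  then show ?thesis unfolding row_rank_def_gen by (rule vec.span_eq_dim)
qed

lemma rank_mult_le: "rank ((A::'a::field^'n^'m) ** (B::'a^'p^'n)) \<le> rank A"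
proof -
  have "range (\<lambda>y. y v* (A ** B)) = (\<lambda>z. z v* B) ` range (\<lambda>y. y v* A)"
    by (auto simp: vector_matrix_mul_assoc image_iff)
  then show ?thesis unfolding rank_lrange using vec.dim_image_le[OF lin_vm] by metis
qed

lemma rank_mult_less:
  fixes A :: "'a::field^'n^'m" and B :: "'a^'p^'n"
  assumes s: "s \<in> range (\<lambda>y. y v* A)" "s \<noteq> 0" "s v* B = 0"
  shows "rank (A ** B) < rank A"
proof -
  let ?V = "range (\<lambda>y. y v* A)"
  let ?h = "\<lambda>z. z v* B"
  have ind: "vec.independent {s}" using s(2) by (simp add: vec.independent_insert)
  obtain B0 where B0: "{s} \<subseteq> B0" "B0 \<subseteq> ?V" "vec.independent B0" "?V \<subseteq> vec.span B0"
    using vec.maximal_independent_subset_extend[of "{s}" ?V] s(1) ind by auto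
  have fin: "finite B0" using B0(3) vec.finiteI_independent by blast
  have card: "card B0 = vec.dim ?V" using B0 vec.basis_card_eq_dim by blast
  have sub: "?h ` ?V \<subseteq> vec.span (?h ` (B0 - {s}))"
  proof
    fix x assume "x \<in> ?h ` ?V"
    then obtain v where v: "v \<in> ?V" "x = ?h v" by blast
    have "v \<in> vec.span (insert s (B0 - {s}))" using B0 v(1) by (metis insert_Diff insert_subset subsetD)
    then obtain k where k: "v - k *s s \<in> vec.span (B0 - {s})" using vec.span_breakdown_eq by blast
    have "?h (v - k *s s) = x" using v(2) s(3)
      using vec.linear_diff[OF lin_vm, of v "k *s s" B] vec.linear_scale[OF lin_vm, of k s B]
      by (simp del: vector_smult_rzero add: vec.scale_zero_right)
    then show "x \<in> vec.span (?h ` (B0 - {s}))"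
      using k vec.linear_span_image[OF lin_vm[of B], of "B0 - {s}"] by blast
  qed
  have "vec.dim (?h ` ?V) \<le> card (?h ` (B0 - {s}))"
    using vec.dim_le_card[OF sub] fin by blast
  also have "\<dots> \<le> card (B0 - {s})" using fin by (simp add: card_image_le)
  also have "\<dots> < card B0" using fin B0(1) card_gt_0_iff[of B0] by auto
  finally have "vec.dim (?h ` ?V) < vec.dim ?V" using card by simp
  moreover have "range (\<lambda>y. y v* (A ** B)) = ?h ` ?V"
    by (auto simp: vector_matrix_mul_assoc image_iff)
  ultimately show ?thesis unfolding rank_lrange by simp
qed



definition outer :: "'a::field^'n \<Rightarrow> 'a^'n \<Rightarrow> 'a^'n^'n" where
  "outer u v = (\<chi> i j. u$i * v$j)"

definition dotp :: "'a::field^'n \<Rightarrow> 'a^'n \<Rightarrow> 'a" where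
  "dotp u v = (\<Sum>i\<in>UNIV. u$i * v$i)"

lemma outer_outer: "outer u v ** outer w z = outer (dotp v w *s u) z"
  by (simp add: vec_eq_iff matrix_matrix_mult_def outer_def dotp_def sum_distrib_left sum_distrib_right mult_ac)

lemma mat_outer: "A ** outer u v = outer (A *v u) v"
  by (simp add: vec_eq_iff matrix_matrix_mult_def outer_def matrix_vector_mult_def sum_distrib_left sum_distrib_right mult_ac)

lemma outer_mat: "outer u v ** A = outer u (v v* A)"
  by (simp add: vec_eq_iff matrix_matrix_mult_def outer_def vector_matrix_mult_def sum_distrib_left sum_distrib_right mult_ac)

lemma outer_zero_left[simp]: "outer 0 v = 0" and outer_zero_right[simp]: "outer u 0 = 0"
  by (simp_all add: vec_eq_iff outer_def)

lemma outer_mv: "outer u v *v x = dotp v x *s u"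
  by (simp add: vec_eq_iff outer_def matrix_vector_mult_def dotp_def sum_distrib_left sum_distrib_right mult_ac)

lemma outer_vm: "x v* outer u v = dotp x u *s v"
  by (simp add: vec_eq_iff outer_def vector_matrix_mult_def dotp_def sum_distrib_left sum_distrib_right mult_ac)

lemma dotp_vm: "dotp (x v* A) u = dotp x (A *v u)"
  unfolding dotp_def vector_matrix_mult_def matrix_vector_mult_def
  by (simp add: sum_distrib_left sum_distrib_right mult_ac) (rule sum.swap)

lemma outer_add_left: "outer (u + w) v = outer u v + outer w v"
  and outer_add_right: "outer u (v + w) = outer u v + outer u w"
  and outer_diff_left: "outer (u - w) v = outer u v - outer w v"
  and outer_diff_right: "outer u (v - w) = outer u v - outer u w"
  by (simp_all add: vec_eq_iff outer_def algebra_simps)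

lemma dotp_add_left: "dotp (u + w) v = dotp u v + dotp w v"
  and dotp_add_right: "dotp u (v + w) = dotp u v + dotp u w"
  and dotp_diff_left: "dotp (u - w) v = dotp u v - dotp w v"
  and dotp_diff_right: "dotp u (v - w) = dotp u v - dotp u w"
  and dotp_scale_left: "dotp (c *s u) v = c * dotp u v"
  and dotp_scale_right: "dotp u (c *s v) = c * dotp u v"
  by (simp_all add: dotp_def algebra_simps sum.distrib sum_subtractf sum_distrib_left)

lemma dotp_zero[simp]: "dotp 0 v = 0" "dotp v 0 = 0"
  by (simp_all add: dotp_def)

lemma dotp_axis_left: "dotp (axis i 1) v = v$i" and dotp_axis_right: "dotp v (axis i 1) = v$i"
proof -
  have "\<And>f. (\<Sum>k\<in>UNIV. (if k = i then 1 else 0) * f k) = (f i :: 'a::field)"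
    by (simp add: if_distrib[of "\<lambda>c. c * _"] cong: if_cong)
  moreover have "\<And>f. (\<Sum>k\<in>UNIV. f k * (if k = i then 1 else 0)) = (f i :: 'a::field)"
    by (simp add: if_distrib[of "\<lambda>c. _ * c"] cong: if_cong)
  ultimately show "dotp (axis i 1) v = v$i" "dotp v (axis i 1) = v$i"
    by (simp_all add: dotp_def axis_def)
qed



lemma mm_add_left: "((A::'a::field^'n^'n) + B) ** C = A ** C + B ** C"
  by (simp add: vec_eq_iff matrix_matrix_mult_def algebra_simps sum.distrib)
lemma mm_diff_left: "((A::'a::field^'n^'n) - B) ** C = A ** C - B ** C"
  by (simp add: vec_eq_iff matrix_matrix_mult_def algebra_simps sum_subtractf)
lemma mm_add_right: "(A::'a::field^'n^'n) ** (B + C) = A ** B + A ** C"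
  by (simp add: vec_eq_iff matrix_matrix_mult_def algebra_simps sum.distrib)
lemma mm_diff_right: "(A::'a::field^'n^'n) ** (B - C) = A ** B - A ** C"
  by (simp add: vec_eq_iff matrix_matrix_mult_def algebra_simps sum_subtractf)

lemma outer_scale_left: "outer (c *s u) v = outer u (c *s v)"
  by (simp add: vec_eq_iff outer_def mult_ac)

lemma matpow_1[simp]: "matpow x (Suc 0) = x" by simp

lemma matpow_add: "matpow x (a + b) = matpow x a ** matpow x b"
  by (induction a) (simp_all add: matrix_mul_assoc)

lemma matpow_in:
  assumes semi: "mat_subsemigroup S" and x: "x \<in> S" and m: "0 < m"
  shows "matpow x m \<in> S"
  using m
proof (induction m)
  case 0 then show ?case by simp
next
  case (Suc k)
  show ?case
  proof (cases k)
    case 0 then show ?thesis using x by simp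
  next
    case (Suc j)
    then have "matpow x k \<in> S" using Suc.IH by simp
    then show ?thesis using semi x unfolding mat_subsemigroup_def by simp
  qed
qed

lemma iso_in:
  assumes iso: "mat_isolated S" and m: "0 < m" and "matpow x m \<in> S"
  shows "x \<in> S"
  using assms unfolding mat_isolated_def by blast

lemma rank_matpow:
  assumes "0 < m" shows "rank (matpow (x::'a::field^'n^'n) m) \<le> rank x"
  using assms by (cases m) (simp_all add: rank_mult_le)

lemma idem_pow:
  fixes x :: "'a::{field,finite}^'n^'n"
  shows "\<exists>m>0. matpow x m ** matpow x m = matpow x m"
proof -
  have "\<not> inj (matpow x)"
  proof
    assume "inj (matpow x)"
    then have "infinite (range (matpow x))" by (rule range_inj_infinite)
    then show False using finite_subset[of "range (matpow x)" UNIV] by simp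
  qed
  then obtain i j where ij: "i < j" "matpow x i = matpow x j"
    unfolding inj_def by (metis linorder_neqE_nat)
  define p where "p = j - i"
  have p: "p > 0" "j = i + p" using ij by (auto simp: p_def)
  have step: "matpow x (i + k + p) = matpow x (i + k)" for k
  proof -
    have "matpow x (i + k + p) = matpow x k ** matpow x j"
      using matpow_add[of x k j] p(2) by (simp add: add_ac)
    also have "\<dots> = matpow x k ** matpow x i" using ij by simp
    also have "\<dots> = matpow x (i + k)" using matpow_add[of x k i] by (simp add: add_ac)
    finally show ?thesis .
  qed
  have per: "matpow x (i + k + t * p) = matpow x (i + k)" for k t
  proof (induction t)
    case 0 then show ?case by simp
  next
    case (Suc t)
    have "matpow x (i + k + Suc t * p) = matpow x (i + (k + t * p) + p)" by (simp add: add_ac)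
    also have "\<dots> = matpow x (i + (k + t * p))" by (rule step)
    also have "\<dots> = matpow x (i + k)" using Suc by (simp add: add_ac)
    finally show ?case .
  qed
  define m where "m = Suc i * p"
  have m: "m > 0" "m \<ge> i" using p by (cases p; auto simp: m_def)+
  have "matpow x m ** matpow x m = matpow x (i + (m - i) + Suc i * p)"
    using matpow_add[of x m m] m by (simp add: m_def)
  also have "\<dots> = matpow x m" using per[of "m - i" "Suc i"] m by simp
  finally show ?thesis using m by blast
qed

lemma char_exists: "\<exists>m>0. (of_nat m :: 'a::{field,finite}) = 0"
proof -
  have "\<not> inj (of_nat :: nat \<Rightarrow> 'a)"
  proof
    assume "inj (of_nat :: nat \<Rightarrow> 'a)"
    then have "infinite (range (of_nat :: nat \<Rightarrow> 'a))" by (rule range_inj_infinite)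
    then show False using finite_subset[of "range (of_nat :: nat \<Rightarrow> 'a)" UNIV] by simp
  qed
  then obtain i j where ij: "i < j" "(of_nat i :: 'a) = of_nat j"
    unfolding inj_def by (metis linorder_neqE_nat)
  then have "(of_nat (j - i) :: 'a) = 0" by (simp add: of_nat_diff)
  then show ?thesis using ij by (intro exI[of _ "j - i"]) simp
qed

lemma left_kernel:
  fixes A :: "'a::field^'n^'n"
  assumes "rank A < CARD('n)"
  shows "\<exists>y. y \<noteq> 0 \<and> y v* A = 0"
proof (rule ccontr)
  assume "\<not> ?thesis"
  then have "inj (\<lambda>y. y v* A)" using vec.linear_inj_iff_eq_0[OF lin_vm[of A]] by blast
  then have "surj (\<lambda>y. y v* A)"
    using vec.linear_injective_imp_surjective[OF lin_vm[of A]] by blast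
  then have "rank A = CARD('n)" unfolding rank_lrange using vec_dim_card by metis
  then show False using assms by simp
qed

lemma left_kernel2:
  fixes A :: "'a::field^'n^'n"
  assumes "rank A + 2 \<le> CARD('n)"
  shows "\<exists>y1 y2. y1 \<noteq> 0 \<and> y1 v* A = 0 \<and> y2 v* A = 0 \<and> (\<forall>c. y2 \<noteq> c *s y1)"
proof -
  obtain y1 where y1: "y1 \<noteq> 0" "y1 v* A = 0" using left_kernel[of A] assms by auto
  obtain i where i: "y1$i \<noteq> 0" using y1(1) by (metis vec_eq_iff zero_index)
  have "range (\<lambda>y. y v* A) \<noteq> UNIV"
  proof
    assume "range (\<lambda>y. y v* A) = UNIV"
    then have "rank A = CARD('n)" unfolding rank_lrange using vec_dim_card by metis
    then show False using assms by simp
  qed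
  then obtain q where q: "q \<notin> range (\<lambda>y. y v* A)" by blast
  define A' where "A' = A + outer (axis i 1) q"
  have A'y: "y v* A' = y v* A + y$i *s q" for y
    by (simp add: A'_def vector_matrix_mult_add_rdistrib outer_vm dotp_axis_right)
  have "range (\<lambda>y. y v* A') \<subseteq> vec.span (insert q (range (\<lambda>y. y v* A)))"
  proof
    fix z assume "z \<in> range (\<lambda>y. y v* A')"
    then obtain y where "z = y v* A'" by blast
    then have "z = y v* A + y$i *s q" using A'y by simp
    then show "z \<in> vec.span (insert q (range (\<lambda>y. y v* A)))"
    proof -
      have "y v* A \<in> vec.span (insert q (range (\<lambda>y. y v* A)))" by (rule vec.span_base) auto
      moreover have "y$i *s q \<in> vec.span (insert q (range (\<lambda>y. y v* A)))"
        by (intro vec.span_scale vec.span_base) simp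
      ultimately show ?thesis using \<open>z = y v* A + y$i *s q\<close> vec.span_add by metis
    qed
  qed
  then have "rank A' \<le> vec.dim (insert q (range (\<lambda>y. y v* A)))"
    unfolding rank_lrange by (rule vec.dim_mono)
  also have "\<dots> \<le> rank A + 1" unfolding rank_lrange by (simp add: vec.dim_insert)
  finally have "rank A' < CARD('n)" using assms by simp
  then obtain y2 where y2: "y2 \<noteq> 0" "y2 v* A' = 0" using left_kernel[of A'] by auto
  have y2i: "y2$i = 0"
  proof (rule ccontr)
    assume ne: "y2$i \<noteq> 0"
    have "y2 v* A + y2$i *s q = 0" using y2(2) A'y by simp
    then have "q = (- (1 / y2$i)) *s (y2 v* A)"
      using ne by (simp add: vec_eq_iff field_simps add_eq_0_iff)
    also have "\<dots> = ((- (1 / y2$i)) *s y2) v* A"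
      by (simp add: vec_eq_iff vector_matrix_mult_def sum_distrib_left sum_negf sum_divide_distrib mult_ac)
    finally show False using q by blast
  qed
  have "y2 v* A = 0" using y2(2) A'y[of y2] y2i by simp
  moreover have "y2 \<noteq> c *s y1" for c
  proof
    assume "y2 = c *s y1"
    then have "c * y1$i = 0" using y2i by simp
    then have "c = 0" using i by simp
    then show False using \<open>y2 = c *s y1\<close> y2(1) by simp
  qed
  ultimately show ?thesis using y1 by blast
qed



lemma vm_diff_right: "(x::'a::field^'n) v* (A - B) = x v* A - x v* B"
  by (simp add: vec_eq_iff vector_matrix_mult_def algebra_simps sum_subtractf)
lemma vm_add_right: "(x::'a::field^'n) v* (A + B) = x v* A + x v* B"
  by (simp add: vec_eq_iff vector_matrix_mult_def algebra_simps sum.distrib)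
lemma vm_diff_left: "((x::'a::field^'n) - y) v* A = x v* A - y v* A"
  by (simp add: vec_eq_iff vector_matrix_mult_def algebra_simps sum_subtractf)
lemma vm_add_left: "((x::'a::field^'n) + y) v* A = x v* A + y v* A"
  by (simp add: vec_eq_iff vector_matrix_mult_def algebra_simps sum.distrib)
lemma vm_scale: "((c::'a::field) *s x) v* A = c *s (x v* A)"
  by (simp add: vec_eq_iff vector_matrix_mult_def sum_distrib_left mult_ac)
lemma mv_diff_right: "(A::'a::field^'n^'n) *v (x - y) = A *v x - A *v y"
  by (simp add: vec_eq_iff matrix_vector_mult_def algebra_simps sum_subtractf)
lemma mv_diff_left: "((A::'a::field^'n^'n) - B) *v x = A *v x - B *v x"
  by (simp add: vec_eq_iff matrix_vector_mult_def algebra_simps sum_subtractf)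
lemma vm_neg: "(- (x::'a::field^'n)) v* A = - (x v* A)"
  by (simp add: vec_eq_iff vector_matrix_mult_def sum_negf)
lemma mv_add_right: "(A::'a::field^'n^'n) *v (x + y) = A *v x + A *v y"
  by (simp add: vec_eq_iff matrix_vector_mult_def algebra_simps sum.distrib)
lemma mv_add_left: "((A::'a::field^'n^'n) + B) *v x = A *v x + B *v x"
  by (simp add: vec_eq_iff matrix_vector_mult_def algebra_simps sum.distrib)

lemma vm_axis: "(axis i 1 v* (A::'a::field^'n^'m)) $ k = A$i$k"
  using row_axis[of i A] by (simp add: row_def)

lemma mv_axis: "((A::'a::field^'n^'m) *v axis j 1) $ i = A$i$j"
proof -
  have "(\<Sum>k\<in>UNIV. A$i$k * (if k = j then 1 else 0)) = A$i$j"
    by (simp add: if_distrib[of "\<lambda>c. _ * c"] cong: if_cong)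
  then show ?thesis by (simp add: matrix_vector_mult_def axis_def)
qed

lemma nonzero_entry: "(A::'a::field^'n^'m) \<noteq> 0 \<Longrightarrow> \<exists>i j. A$i$j \<noteq> 0"
  by (metis vec_eq_iff zero_index)

lemma nonzero_comp: "(y::'a::field^'n) \<noteq> 0 \<Longrightarrow> \<exists>i. y$i \<noteq> 0"
  by (metis vec_eq_iff zero_index)

lemma matpow_2: "matpow a 2 = a ** a"
  by (simp add: numeral_2_eq_2)

lemma UP:
  fixes f :: "'a::field^'n^'n"
  assumes semi: "mat_subsemigroup S" and iso: "mat_isolated S"
    and fS: "f \<in> S" and ff: "f ** f = f"
    and h: "f *v c1 = 0" "f *v c2 = 0" "r1 v* f = 0" "r2 v* f = 0"
      "dotp r1 c1 = 1" "dotp r1 c2 = 0" "dotp r2 c1 = 0" "dotp r2 c2 = 1"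
  shows "f + outer c1 r1 \<in> S"
proof -
  define a where "a = f + outer c1 r2"
  define b where "b = f + outer c2 r1"
  have "a ** a = f"
    by (simp add: a_def mm_add_left mm_add_right mat_outer outer_mat outer_outer ff h mv_add_left outer_mv vm_add_right outer_vm)
  then have "a \<in> S" using iso_in[OF iso, of 2 a] fS by (simp add: matpow_2)
  have "b ** b = f"
    by (simp add: b_def mm_add_left mm_add_right mat_outer outer_mat outer_outer ff h mv_add_left outer_mv vm_add_right outer_vm)
  then have "b \<in> S" using iso_in[OF iso, of 2 b] fS by (simp add: matpow_2)
  have "a ** b = f + outer c1 r1"
    by (simp add: a_def b_def mm_add_left mm_add_right mat_outer outer_mat outer_outer ff h mv_add_left outer_mv vm_add_right outer_vm)
  then show ?thesis using semi \<open>a \<in> S\<close> \<open>b \<in> S\<close> unfolding mat_subsemigroup_def by metis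
qed

lemma stepA:
  fixes S :: "('a::field^'n^'n) set"
  assumes semi: "mat_subsemigroup S" and iso: "mat_isolated S" and z: "0 \<in> S"
  shows "e ** e = e \<Longrightarrow> rank e < CARD('n) \<Longrightarrow> e \<in> S"
proof (induction "rank e" arbitrary: e rule: less_induct)
  case less
  show ?case
  proof (cases "e = 0")
    case True then show ?thesis using z by simp
  next
    case False
    then obtain i j where ij: "e$i$j \<noteq> 0" using nonzero_entry by blast
    define c1 where "c1 = e *v axis j 1"
    have c1i: "c1$i = e$i$j" by (simp add: c1_def mv_axis)
    have ec1: "e *v c1 = c1" by (simp add: c1_def matrix_vector_mul_assoc less.prems(1))
    define \<delta> where "\<delta> = (1 / c1$i) *s axis i 1"
    have dc1: "dotp \<delta> c1 = 1" by (simp add: \<delta>_def dotp_scale_left dotp_axis_left c1i ij)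
    define r1 where "r1 = \<delta> v* e"
    have r1c1: "dotp r1 c1 = 1" by (simp add: r1_def dotp_vm ec1 dc1)
    have r1e: "r1 v* e = r1" by (simp add: r1_def vector_matrix_mul_assoc less.prems(1))
    obtain y where y: "y \<noteq> 0" "y v* e = 0" using left_kernel less.prems(2) by blast
    obtain i2 where i2: "y$i2 \<noteq> 0" using nonzero_comp y(1) by blast
    define \<rho> where "\<rho> = (1 / y$i2) *s axis i2 1"
    have y\<rho>: "dotp y \<rho> = 1" by (simp add: \<rho>_def dotp_scale_right dotp_axis_right i2)
    define c2 where "c2 = \<rho> - e *v \<rho>"
    define Oc where "Oc = outer c1 r1"
    define f where "f = e - Oc"
    have ec2: "e *v c2 = 0"
      by (simp add: c2_def mv_diff_right matrix_vector_mul_assoc less.prems(1))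
    have r1c2: "dotp r1 c2 = 0" by (simp add: r1_def dotp_vm ec2)
    have "dotp y c1 = dotp y (e *v c1)" using ec1 by simp
    also have "\<dots> = 0" by (simp add: dotp_vm[symmetric] y(2))
    finally have yc1: "dotp y c1 = 0" .
    have yc2: "dotp y c2 = 1"
      by (simp add: c2_def dotp_diff_right y\<rho> dotp_vm[symmetric] y(2))
    have ff: "f ** f = f"
      by (simp add: f_def Oc_def mm_diff_left mm_diff_right mat_outer outer_mat outer_outer
          less.prems(1) ec1 r1e r1c1 mv_diff_left outer_mv vm_diff_right outer_vm)
    have fc1: "f *v c1 = 0" by (simp add: f_def Oc_def mv_diff_left outer_mv ec1 r1c1)
    have fc2: "f *v c2 = 0" by (simp add: f_def Oc_def mv_diff_left outer_mv ec2 r1c2)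
    have r1f: "r1 v* f = 0" by (simp add: f_def Oc_def vm_diff_right outer_vm r1e r1c1)
    have yf: "y v* f = 0" by (simp add: f_def Oc_def vm_diff_right outer_vm y(2) yc1)
    have fe: "f = e ** (mat 1 - Oc)"
      by (simp add: f_def Oc_def mm_diff_right mat_outer ec1)
    have r1nz: "r1 \<noteq> 0" using r1c1 by auto
    have eqz: "r1 v* (mat 1 - Oc) = 0" by (simp add: Oc_def vm_diff_right outer_vm r1c1)
    have rin: "r1 \<in> range (\<lambda>y. y v* e)" unfolding r1_def by blast
    have rk: "rank f < rank e" unfolding fe using rank_mult_less[OF rin r1nz eqz] .
    then have "f \<in> S" using less.hyps[of f] ff less.prems(2) by simp
    have "f + Oc \<in> S" unfolding Oc_def
      by (rule UP[OF semi iso \<open>f \<in> S\<close> ff fc1 fc2 r1f yf r1c1 r1c2 yc1 yc2])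
    then show ?thesis by (simp add: f_def)
  qed
qed

lemma stepB:
  fixes S :: "('a::{field,finite}^'n^'n) set"
  assumes semi: "mat_subsemigroup S" and iso: "mat_isolated S"
  shows "g \<in> S \<Longrightarrow> g ** g = g \<Longrightarrow> rank g + 2 \<le> CARD('n) \<Longrightarrow> 0 \<in> S"
proof (induction "rank g" arbitrary: g rule: less_induct)
  case less
  note gS = less.prems(1) and gg = less.prems(2)
  show ?case
  proof (cases "g = 0")
    case True then show ?thesis using gS by simp
  next
    case False
    obtain y1 y2 where y: "y1 \<noteq> 0" "y1 v* g = 0" "y2 v* g = 0" "\<And>c. y2 \<noteq> c *s y1"
      using left_kernel2[OF less.prems(3)] by blast
    obtain i1 where i1: "y1$i1 \<noteq> 0" using nonzero_comp y(1) by blast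
    define \<psi> where "\<psi> = (1 / y1$i1) *s axis i1 1"
    have y1\<psi>: "dotp y1 \<psi> = 1" by (simp add: \<psi>_def dotp_scale_right dotp_axis_right i1)
    define z2 where "z2 = y2 - dotp y2 \<psi> *s y1"
    have z2nz: "z2 \<noteq> 0" using y(4)[of "dotp y2 \<psi>"] by (simp add: z2_def)
    have z2g: "z2 v* g = 0" by (simp add: z2_def vm_diff_left vm_scale y)
    have z2\<psi>: "dotp z2 \<psi> = 0" by (simp add: z2_def dotp_diff_left dotp_scale_left y1\<psi>)
    obtain i2 where i2: "z2$i2 \<noteq> 0" using nonzero_comp z2nz by blast
    define \<rho> where "\<rho> = (1 / z2$i2) *s axis i2 1"
    have z2\<rho>: "dotp z2 \<rho> = 1" by (simp add: \<rho>_def dotp_scale_right dotp_axis_right i2)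
    define z1 where "z1 = y1 - dotp y1 \<rho> *s z2"
    have z1g: "z1 v* g = 0" by (simp add: z1_def vm_diff_left vm_scale y z2g)
    have z1\<psi>: "dotp z1 \<psi> = 1" by (simp add: z1_def dotp_diff_left dotp_scale_left y1\<psi> z2\<psi>)
    have z1\<rho>: "dotp z1 \<rho> = 0" by (simp add: z1_def dotp_diff_left dotp_scale_left z2\<rho>)
    define c1 where "c1 = \<psi> - g *v \<psi>"
    define c2 where "c2 = \<rho> - g *v \<rho>"
    have gc1: "g *v c1 = 0" by (simp add: c1_def mv_diff_right matrix_vector_mul_assoc gg)
    have gc2: "g *v c2 = 0" by (simp add: c2_def mv_diff_right matrix_vector_mul_assoc gg)
    have z1c1: "dotp z1 c1 = 1" by (simp add: c1_def dotp_diff_right dotp_vm[symmetric] z1g z1\<psi>)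
    have z1c2: "dotp z1 c2 = 0" by (simp add: c2_def dotp_diff_right dotp_vm[symmetric] z1g z1\<rho>)
    have z2c1: "dotp z2 c1 = 0" by (simp add: c1_def dotp_diff_right dotp_vm[symmetric] z2g z2\<psi>)
    have z2c2: "dotp z2 c2 = 1" by (simp add: c2_def dotp_diff_right dotp_vm[symmetric] z2g z2\<rho>)
    define p where "p = g + outer c1 z1"
    have pS: "p \<in> S" unfolding p_def
      by (rule UP[OF semi iso gS gg gc1 gc2 z1g z2g z1c1 z1c2 z2c1 z2c2])
    have pp: "p ** p = p"
      by (simp add: p_def mm_add_left mm_add_right mat_outer outer_mat outer_outer gg gc1 z1g z1c1
          mv_add_left outer_mv vm_add_right outer_vm)
    obtain i0 k0 where ik: "g$i0$k0 \<noteq> 0" using nonzero_entry False by blast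
    define s where "s = axis i0 1 v* g"
    have sk: "s$k0 \<noteq> 0" by (simp add: s_def vm_axis ik)
    then have snz: "s \<noteq> 0" by auto
    have sg: "s v* g = s" by (simp add: s_def vector_matrix_mul_assoc gg)
    define \<delta> where "\<delta> = (1 / s$k0) *s axis k0 1"
    have s\<delta>: "dotp s \<delta> = 1" by (simp add: \<delta>_def dotp_scale_right dotp_axis_right sk)
    define d where "d = g *v \<delta>"
    have gd: "g *v d = d" by (simp add: d_def matrix_vector_mul_assoc gg)
    have sd: "dotp s d = 1" by (simp add: d_def dotp_vm[symmetric] sg s\<delta>)
    have z1d: "dotp z1 d = 0" by (simp add: d_def dotp_vm[symmetric] z1g)
    have sc1: "dotp s c1 = 0"
      by (simp add: c1_def dotp_diff_right dotp_vm[symmetric] sg)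
    define v where "v = c1 - d"
    define \<xi> where "\<xi> = s + z1"
    have pv: "p *v v = v"
      by (simp add: p_def v_def mv_add_left mv_diff_right outer_mv gc1 gd z1c1 z1d)
    have \<xi>p: "\<xi> v* p = \<xi>"
      by (simp add: p_def \<xi>_def vm_add_left vm_add_right outer_vm sg z1g sc1 z1c1 dotp_add_left)
    have \<xi>v: "dotp \<xi> v = 0"
      by (simp add: \<xi>_def v_def dotp_add_left dotp_diff_right sc1 sd z1c1 z1d)
    define y where "y = p + outer v \<xi>"
    have pow: "matpow y (Suc k) = p + outer (of_nat (Suc k) *s v) \<xi>" for k
    proof (induction k)
      case 0 then show ?case by (simp add: y_def)
    next
      case (Suc k)
      have "matpow y (Suc (Suc k)) = y ** (p + outer (of_nat (Suc k) *s v) \<xi>)"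
        using Suc by simp
      also have "\<dots> = p + outer v \<xi> + outer (of_nat (Suc k) *s v) \<xi>"
        by (simp add: y_def mm_add_left mm_add_right mat_outer outer_mat outer_outer pp pv \<xi>p
            vector_scalar_commute dotp_scale_right \<xi>v mv_add_left mv_add_right outer_mv dotp_add_right)
      also have "\<dots> = p + outer (of_nat (Suc (Suc k)) *s v) \<xi>"
        by (simp add: outer_def vec_eq_iff algebra_simps)
      finally show ?case .
    qed
    obtain m0 where m0: "m0 > 0" "(of_nat m0 :: 'a) = 0" using char_exists by blast
    have "matpow y m0 = p" using pow[of "m0 - 1"] m0 by simp
    then have yS: "y \<in> S" using iso_in[OF iso m0(1)] pS by simp
    define x where "x = g ** (y ** g)"
    have xS: "x \<in> S" using semi yS gS unfolding x_def mat_subsemigroup_def by blast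
    have sy: "s v* y = s - \<xi>"
      by (simp add: y_def vm_add_right outer_vm \<xi>_def p_def sg sc1 v_def dotp_diff_right sd)
    have "s v* (y ** g) = 0"
      by (simp add: vector_matrix_mul_assoc[symmetric] sy \<xi>_def vm_diff_left vm_add_left sg z1g vm_neg)
    moreover have "s \<in> range (\<lambda>z. z v* g)" unfolding s_def by blast
    ultimately have rx: "rank x < rank g" unfolding x_def using rank_mult_less snz by blast
    obtain m where m: "m > 0" "matpow x m ** matpow x m = matpow x m" using idem_pow by blast
    have wS: "matpow x m \<in> S" using matpow_in[OF semi xS m(1)] .
    have "rank (matpow x m) < rank g" using rank_matpow[OF m(1), of x] rx by simp
    then show ?thesis using less.hyps[OF _ wS m(2)] less.prems(3) by simp
  qed
qed


lemma case2:
  fixes E E' :: "'a::field^'n^'n"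
  assumes EE: "E ** E = E" and rk: "rank E' < CARD('n)"
    and sub: "{x. E *v x = 0} \<subseteq> range (\<lambda>x. E' *v x)"
  shows "rank (E ** E') < rank E"
proof -
  obtain y0 where y0: "y0 \<noteq> 0" "y0 v* E' = 0" using left_kernel[OF rk] by blast
  have key: "dotp y0 x = dotp (y0 v* E) x" for x
  proof -
    have "E *v (x - E *v x) = 0" by (simp add: mv_diff_right matrix_vector_mul_assoc EE)
    then obtain z where z: "x - E *v x = E' *v z" using sub by blast
    have "dotp y0 (x - E *v x) = 0" unfolding z by (simp add: dotp_vm[symmetric] y0(2))
    then show ?thesis by (simp add: dotp_diff_right dotp_vm)
  qed
  have "y0 = y0 v* E"
    using key by (simp add: vec_eq_iff) (metis dotp_axis_right)
  then have "y0 \<in> range (\<lambda>z. z v* E)" by blast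
  then show ?thesis using rank_mult_less y0 by blast
qed

theorem lemma27:
  fixes S :: "('a::{field,finite}^'n^'n) set"
  assumes n2: "CARD('n) \<ge> 2"
    and semi: "mat_subsemigroup S"
    and iso: "mat_isolated S"
    and cases: "0 \<in> S
      \<or> (\<exists>E\<in>S. \<exists>E'\<in>S. E ** E = E \<and> E' ** E' = E'
            \<and> rank E = CARD('n) - 1 \<and> rank E' = CARD('n) - 1
            \<and> {x. E *v x = 0} \<subseteq> range (\<lambda>x. E' *v x))
      \<or> (\<exists>E\<in>S. E ** E = E \<and> rank E \<le> CARD('n) - 2)"
  shows "{A :: 'a^'n^'n. rank A \<le> CARD('n) - 1} \<subseteq> S"
proof -
  have z: "0 \<in> S"
    using cases
  proof (elim disjE)
    assume "0 \<in> S" then show ?thesis .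
  next
    assume "\<exists>E\<in>S. \<exists>E'\<in>S. E ** E = E \<and> E' ** E' = E'
            \<and> rank E = CARD('n) - 1 \<and> rank E' = CARD('n) - 1
            \<and> {x. E *v x = 0} \<subseteq> range (\<lambda>x. E' *v x)"
    then obtain E E' where EE: "E \<in> S" "E' \<in> S" "E ** E = E" "E' ** E' = E'"
      "rank E = CARD('n) - 1" "rank E' = CARD('n) - 1"
      "{x. E *v x = 0} \<subseteq> range (\<lambda>x. E' *v x)" by blast
    have "rank E' < CARD('n)" using EE(6) n2 by simp
    then have rx: "rank (E ** E') < rank E" using case2[OF EE(3) _ EE(7)] by blast
    define x where "x = E ** E'"
    have xS: "x \<in> S" using semi EE unfolding x_def mat_subsemigroup_def by blast
    obtain m where m: "m > 0" "matpow x m ** matpow x m = matpow x m" using idem_pow by blast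
    have wS: "matpow x m \<in> S" using matpow_in[OF semi xS m(1)] .
    have "rank (matpow x m) + 2 \<le> CARD('n)"
      using rank_matpow[OF m(1), of x] rx EE(5) n2 unfolding x_def by linarith
    then show ?thesis using stepB[OF semi iso wS m(2)] by blast
  next
    assume "\<exists>E\<in>S. E ** E = E \<and> rank E \<le> CARD('n) - 2"
    then obtain E where "E \<in> S" "E ** E = E" "rank E \<le> CARD('n) - 2" by blast
    moreover have "rank E + 2 \<le> CARD('n)" using calculation(3) n2 by linarith
    ultimately show ?thesis using stepB[OF semi iso] by blast
  qed
  show ?thesis
  proof
    fix A :: "'a^'n^'n"
    assume "A \<in> {A. rank A \<le> CARD('n) - 1}"
    then have rA: "rank A < CARD('n)" using n2 by simp
    obtain m where m: "m > 0" "matpow A m ** matpow A m = matpow A m" using idem_pow by blast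
    have "rank (matpow A m) < CARD('n)" using rank_matpow[OF m(1), of A] rA by linarith
    then have "matpow A m \<in> S" using stepA[OF semi iso z m(2)] by blast
    then show "A \<in> S" using iso_in[OF iso m(1)] by blast
  qed
qed

end
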